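(* Let $\mathcal{H}^1_{\mathrm{TT}}=(C,F^1,D,G)$ be a two-timescale system satisfying the Hybrid Basic Conditions, and let $(\Phi,\{H_k\}_{k=1}^\infty)$, with $H_k=(h_{s,k},h_{f,k})$, be a two-timescale asymptotic simulation of $\mathcal{H}^1_{\mathrm{TT}}$. Then $(\Phi,\{h_{f,k}\}_{k=1}^\infty)$ is an asymptotic simulation of the boundary layer system $\mathcal{H}_{\mathrm{BL}}=(C,\widetilde F,D,G)$, where $\widetilde F(x):=\{0\}\times F_f(x)$.
   Context: Hybrid inclusions. A hybrid inclusion $\mathcal H=(C,F,D,G)$ on $\mathbb R^n$ consists of sets $C,D\subset\mathbb R^n$ and set-valued maps $F,G:\mathbb R^n\rightrightarrows\mathbb R^n$, representing the dynamics $x\in C,\ \dot x\in F(x)$ and $x\in D,\ x^+\in G(x)$. $\mathcal H$ satisfies the Hybrid Basic Conditions if $C,D$ are closed; $F,G$ are outer semicontinuous and locally bounded; $F(x)$ is nonempty and convex for every $x\in C$; $G(x)$ is nonempty for every $x\in D$. Define $F_C(x):=F(x)$ if $x\in C$ and $F_C(x):=\emptyset$ otherwise, and $G_D(x):=G(x)$ if $x\in D$ and $\emptyset$ otherwise; thus $\mathrm{gph}(F_C)=\mathrm{gph}(F)\cap(C\times\mathbb R^n)$ and $\mathrm{gph}(G_D)=\mathrm{gph}(G)\cap(D\times\mathbb R^n)$. Hybrid sequences. A compact hybrid sequence domain is a set $E=\bigcup_{j=0}^{J-1}(\{k_j,\dots,k_{j+1}\}\times\{j\})\subset\mathbb Z_{\ge0}^2$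 with $J\in\mathbb N$ and integers $0=k_0\le k_1\le\dots\le k_J$; a hybrid sequence domain is the union of a nondecreasing sequence of compact hybrid sequence domains; a hybrid sequence is a map $\phi$ whose domain $\mathrm{dom}\,\phi$ is a hybrid sequence domain. It is complete if its domain is unbounded, complete in the $k$-direction if the set of $k$'s occurring in its domain is unbounded, and complete in the $j$-direction if the set of $j$'s occurring is unbounded. Set $\bar\jmath_k:=\inf\{j\in\mathbb Z_{\ge0}:(k+1,j)\in\mathrm{dom}\,\phi\}$ and $\bar k_j:=\inf\{k\in\mathbb Z_{\ge0}:(k,j+1)\in\mathrm{dom}\,\phi\}$ ($\inf\emptyset=\infty$). The $\limsup$ of a sequence of points denotes its outer limit, i.e. the set of all its accumulation points. Asymptotic simulations. A sequence $\{h_k\}_{k=1}^\infty$ is admissible if $h_k>0$ for all $k$, $h_k\to0$, and $\sum_k h_k=\infty$; set $\tau_k:=\sum_{i=0}^{k-1}h_{i+1}$ ($k\in\mathbb Z_{\ge0}$) and $m(t):=\max\{k\in\mathbb Z_{\ge0}:\tau_k\le t\}$. A pair $(\phi,\{h_k\})$ is an asymptotic simulation of $\mathcal H=(C,F,D,G)$ if $\phi$ is a bounded complete hybrid sequence in $\mathbb R^n$, $\{h_k\}$ is admissible, and: (1) if $\phi$ is complete in the $k$-direction, there is a bounded sequence $\{f_k\}_{k=0}^\infty\subset\mathbb R^n$ with $\limsup_{k\to\infty}(\phi(k,\bar\jmath_k),f_k)\subset\mathrm{gph}(F_C)$ and, with $\hat f_{k+1}:=(\phi(k+1,\bar\jmath_k)-\phi(k,\bar\jmath_k))/h_{k+1}$,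 for every $T>0$: $\lim_{n\to\infty}\sup_{n+1\le k\le m(\tau_n+T)}\big|\sum_{i=n}^{k-1}h_{i+1}(\hat f_{i+1}-f_i)\big|=0$; (2) if $\phi$ is complete in the $j$-direction, $\limsup_{j\to\infty}(\phi(\bar k_j,j),\phi(\bar k_j,j+1))\subset\mathrm{gph}(G_D)$. Two-timescale setting. Let $n=n_s+n_f$ and write $x=(x_s,x_f)\in\mathbb R^{n_s}\times\mathbb R^{n_f}$. The two-timescale system $\mathcal H^1_{\mathrm{TT}}=(C,F^1,D,G)$ has $C,D\subset\mathbb R^n$, $F_s:\mathbb R^n\rightrightarrows\mathbb R^{n_s}$, $F_f:\mathbb R^n\rightrightarrows\mathbb R^{n_f}$, $F^1(x):=F_s(x_s,x_f)\times F_f(x_s,x_f)$, and $G:\mathbb R^n\rightrightarrows\mathbb R^n$. A sequence $\{H_k\}_{k=1}^\infty$, $H_k=(h_{s,k},h_{f,k})\in\mathbb R^2_{>0}$, is two-timescale admissible if $\{h_{s,k}\}$ and $\{h_{f,k}\}$ are each admissible and $\lim_{k\to\infty}h_{s,k}/h_{f,k}=0$. For $r\in\{s,f\}$ set $\tau_{r,k}:=\sum_{i=0}^{k-1}h_{r,i+1}$, $m_r(t):=\max\{k\in\mathbb Z_{\ge0}:\tau_{r,k}\le t\}$, and $\mathcal I_{r,n,T}:=\{k\in\mathbb Z_{\ge0}:n+1\le k\le m_r(\tau_{r,n}+T)\}$. A pair $(\Phi,\{H_k\})$ is a two-timescale asymptotic simulation of $\mathcal H^1_{\mathrm{TT}}$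 if $\Phi=(\phi_s,\phi_f)$ is a bounded complete hybrid sequence in $\mathbb R^n$, $\{H_k\}$ is two-timescale admissible, and: (1) if $\Phi$ is complete in the $k$-direction, there is a bounded sequence $f_k=(f_{s,k},f_{f,k})\in\mathbb R^{n_s}\times\mathbb R^{n_f}$, $k\ge0$, with $\limsup_{k\to\infty}(\Phi(k,\bar\jmath_k),f_k)\subset\mathrm{gph}(F^1_C)$ and, with $\hat f_{r,k+1}:=(\phi_r(k+1,\bar\jmath_k)-\phi_r(k,\bar\jmath_k))/h_{r,k+1}$, for every $T>0$ and each $r\in\{s,f\}$: $\lim_{n\to\infty}\sup_{k\in\mathcal I_{r,n,T}}\big|\sum_{i=n}^{k-1}h_{r,i+1}(\hat f_{r,i+1}-f_{r,i})\big|=0$; (2) if $\Phi$ is complete in the $j$-direction, $\limsup_{j\to\infty}(\Phi(\bar k_j,j),\Phi(\bar k_j,j+1))\subset\mathrm{gph}(G_D)$. *)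

theory Defs
  imports "HOL-Analysis.Analysis"
begin

definition gph_restr :: "'v set \<Rightarrow> ('v \<Rightarrow> 'w set) \<Rightarrow> ('v \<times> 'w) set" where
  "gph_restr C F = {(x, y). x \<in> C \<and> y \<in> F x}"

definition outer_semicontinuous :: "('v::metric_space \<Rightarrow> 'w::metric_space set) \<Rightarrow> bool" where
  "outer_semicontinuous F \<longleftrightarrow>
     (\<forall>x y (xs :: nat \<Rightarrow> 'v) (ys :: nat \<Rightarrow> 'w).
        xs \<longlonglongrightarrow> x \<longrightarrow> ys \<longlonglongrightarrow> y \<longrightarrow> (\<forall>i. ys i \<in> F (xs i)) \<longrightarrow> y \<in> F x)"

definition locally_bounded_map :: "('v::metric_space \<Rightarrow> 'w::metric_space set) \<Rightarrow> bool" where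
  "locally_bounded_map F \<longleftrightarrow> (\<forall>x. \<exists>U. open U \<and> x \<in> U \<and> bounded (\<Union> (F ` U)))"

definition hybrid_basic_conditions ::
  "'v::euclidean_space set \<Rightarrow> ('v \<Rightarrow> 'v set) \<Rightarrow> 'v set \<Rightarrow> ('v \<Rightarrow> 'v set) \<Rightarrow> bool" where
  "hybrid_basic_conditions C F D G \<longleftrightarrow>
     closed C \<and> closed D \<and>
     outer_semicontinuous F \<and> locally_bounded_map F \<and>
     outer_semicontinuous G \<and> locally_bounded_map G \<and>
     (\<forall>x\<in>C. F x \<noteq> {} \<and> convex (F x)) \<and>
     (\<forall>x\<in>D. G x \<noteq> {})"

definition compact_hs_domain :: "(nat \<times> nat) set \<Rightarrow> bool" where
  "compact_hs_domain E \<longleftrightarrow>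
     (\<exists>J::nat. \<exists>k::nat \<Rightarrow> nat. J \<ge> 1 \<and> k 0 = 0 \<and> (\<forall>j<J. k j \<le> k (Suc j)) \<and>
        E = (\<Union>j<J. {k j..k (Suc j)} \<times> {j}))"

definition hs_domain :: "(nat \<times> nat) set \<Rightarrow> bool" where
  "hs_domain E \<longleftrightarrow>
     (\<exists>Es :: nat \<Rightarrow> (nat \<times> nat) set. (\<forall>i. compact_hs_domain (Es i)) \<and>
        (\<forall>i. Es i \<subseteq> Es (Suc i)) \<and> E = (\<Union>i. Es i))"

definition bounded_complete_hs :: "(nat \<times> nat) set \<Rightarrow> (nat \<times> nat \<Rightarrow> 'v::metric_space) \<Rightarrow> bool" where
  "bounded_complete_hs E \<phi> \<longleftrightarrow> hs_domain E \<and> bounded (\<phi> ` E) \<and> infinite E"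

definition complete_k :: "(nat \<times> nat) set \<Rightarrow> bool" where
  "complete_k E \<longleftrightarrow> infinite (fst ` E)"

definition complete_j :: "(nat \<times> nat) set \<Rightarrow> bool" where
  "complete_j E \<longleftrightarrow> infinite (snd ` E)"

text \<open>\<open>jbar E k\<close> = least j with (k+1, j) in E; \<open>kbar E j\<close> = least k with (k, j+1) in E.
  (Only used when these sets are nonempty.)\<close>
definition jbar :: "(nat \<times> nat) set \<Rightarrow> nat \<Rightarrow> nat" where
  "jbar E k = (LEAST j. (Suc k, j) \<in> E)"

definition kbar :: "(nat \<times> nat) set \<Rightarrow> nat \<Rightarrow> nat" where
  "kbar E j = (LEAST k. (k, Suc j) \<in> E)"

definition seq_limsup :: "(nat \<Rightarrow> 'v::metric_space) \<Rightarrow> 'v set" where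
  "seq_limsup x = {y. \<exists>r. strict_mono r \<and> (x \<circ> r) \<longlonglongrightarrow> y}"

text \<open>Step sizes are indexed from 1: \<open>h (Suc i)\<close> is h_{i+1}; \<open>h 0\<close> is irrelevant.\<close>
definition admissible :: "(nat \<Rightarrow> real) \<Rightarrow> bool" where
  "admissible h \<longleftrightarrow> (\<forall>k\<ge>1. h k > 0) \<and> h \<longlonglongrightarrow> 0 \<and>
     filterlim (\<lambda>n. \<Sum>i<n. h (Suc i)) at_top sequentially"

definition tau :: "(nat \<Rightarrow> real) \<Rightarrow> nat \<Rightarrow> real" where
  "tau h k = (\<Sum>i<k. h (Suc i))"

definition mfun :: "(nat \<Rightarrow> real) \<Rightarrow> real \<Rightarrow> nat" where
  "mfun h t = (GREATEST k. tau h k \<le> t)"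

definition fhat :: "(nat \<times> nat) set \<Rightarrow> (nat \<times> nat \<Rightarrow> 'v::real_normed_vector) \<Rightarrow> (nat \<Rightarrow> real) \<Rightarrow> nat \<Rightarrow> 'v" where
  "fhat E \<phi> h k = (1 / h (Suc k)) *\<^sub>R (\<phi> (Suc k, jbar E k) - \<phi> (k, jbar E k))"
  \<comment> \<open>this is \<open>\<hat>f_{k+1}\<close>\<close>

text \<open>\<open>lim_{n} sup_{n+1 \<le> k \<le> m(tau_n + T)} |\<Sum>_{i=n}^{k-1} h_{i+1}(fhat_{i+1} - f_i)| = 0\<close>,
  with the (nonnegative) sup over a finite, possibly empty, index set written out.\<close>
definition asym_pseudo_traj :: "(nat \<Rightarrow> real) \<Rightarrow> (nat \<Rightarrow> 'v::real_normed_vector) \<Rightarrow> (nat \<Rightarrow> 'v) \<Rightarrow> bool" where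
  "asym_pseudo_traj h fh f \<longleftrightarrow>
     (\<forall>T>0. \<forall>e>0. \<exists>N. \<forall>n\<ge>N. \<forall>k. n + 1 \<le> k \<and> k \<le> mfun h (tau h n + T) \<longrightarrow>
        norm (\<Sum>i=n..<k. h (Suc i) *\<^sub>R (fh i - f i)) \<le> e)"

definition asymptotic_simulation ::
  "'v::euclidean_space set \<Rightarrow> ('v \<Rightarrow> 'v set) \<Rightarrow> 'v set \<Rightarrow> ('v \<Rightarrow> 'v set) \<Rightarrow>
   (nat \<times> nat) set \<Rightarrow> (nat \<times> nat \<Rightarrow> 'v) \<Rightarrow> (nat \<Rightarrow> real) \<Rightarrow> bool" where
  "asymptotic_simulation C F D G E \<phi> h \<longleftrightarrow>
     bounded_complete_hs E \<phi> \<and> admissible h \<and>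
     (complete_k E \<longrightarrow>
        (\<exists>f :: nat \<Rightarrow> 'v. bounded (range f) \<and>
           seq_limsup (\<lambda>k. (\<phi> (k, jbar E k), f k)) \<subseteq> gph_restr C F \<and>
           asym_pseudo_traj h (fhat E \<phi> h) f)) \<and>
     (complete_j E \<longrightarrow>
        seq_limsup (\<lambda>j. (\<phi> (kbar E j, j), \<phi> (kbar E j, Suc j))) \<subseteq> gph_restr D G)"

definition F1 :: "('a \<times> 'b \<Rightarrow> 'a set) \<Rightarrow> ('a \<times> 'b \<Rightarrow> 'b set) \<Rightarrow> 'a \<times> 'b \<Rightarrow> ('a \<times> 'b) set" where
  "F1 Fs Ff x = Fs x \<times> Ff x"

definition tt_admissible :: "(nat \<Rightarrow> real) \<Rightarrow> (nat \<Rightarrow> real) \<Rightarrow> bool" where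
  "tt_admissible hs hf \<longleftrightarrow> admissible hs \<and> admissible hf \<and> (\<lambda>k. hs k / hf k) \<longlonglongrightarrow> 0"

definition tt_asymptotic_simulation ::
  "('a::euclidean_space \<times> 'b::euclidean_space) set \<Rightarrow> ('a \<times> 'b \<Rightarrow> 'a set) \<Rightarrow> ('a \<times> 'b \<Rightarrow> 'b set) \<Rightarrow>
   ('a \<times> 'b) set \<Rightarrow> ('a \<times> 'b \<Rightarrow> ('a \<times> 'b) set) \<Rightarrow>
   (nat \<times> nat) set \<Rightarrow> (nat \<times> nat \<Rightarrow> 'a \<times> 'b) \<Rightarrow> (nat \<Rightarrow> real) \<Rightarrow> (nat \<Rightarrow> real) \<Rightarrow> bool" where
  "tt_asymptotic_simulation C Fs Ff D G E \<Phi> hs hf \<longleftrightarrow>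
     bounded_complete_hs E \<Phi> \<and> tt_admissible hs hf \<and>
     (complete_k E \<longrightarrow>
        (\<exists>f :: nat \<Rightarrow> 'a \<times> 'b. bounded (range f) \<and>
           seq_limsup (\<lambda>k. (\<Phi> (k, jbar E k), f k)) \<subseteq> gph_restr C (F1 Fs Ff) \<and>
           asym_pseudo_traj hs (fhat E (\<lambda>p. fst (\<Phi> p)) hs) (\<lambda>k. fst (f k)) \<and>
           asym_pseudo_traj hf (fhat E (\<lambda>p. snd (\<Phi> p)) hf) (\<lambda>k. snd (f k)))) \<and>
     (complete_j E \<longrightarrow>
        seq_limsup (\<lambda>j. (\<Phi> (kbar E j, j), \<Phi> (kbar E j, Suc j))) \<subseteq> gph_restr D G)"

end

theory Submission
  imports Defs "HOL-Library.Product_Plus"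
begin

lemma adm_pos:
  assumes "admissible h" shows "h (Suc i) > 0"
  using assms unfolding admissible_def by (metis Suc_eq_plus1 le_add2 add.commute)

lemma tau_split:
  assumes "m \<le> k"
  shows "tau h k = tau h m + (\<Sum>i=m..<k. h (Suc i))"
  unfolding tau_def using assms
  by (metis atLeast0LessThan le0 sum.atLeastLessThan_concat)

lemma tau_mono:
  assumes "admissible h" "m \<le> k"
  shows "tau h m \<le> tau h k"
proof -
  have "0 \<le> (\<Sum>i=m..<k. h (Suc i))"
    using adm_pos[OF assms(1)] by (intro sum_nonneg) (simp add: less_imp_le)
  then show ?thesis using tau_split[OF assms(2), of h] by simp
qed

lemma mfun_props:
  assumes "admissible h" "t \<ge> 0"
  shows "tau h (mfun h t) \<le> t" and "tau h k \<le> t \<Longrightarrow> k \<le> mfun h t"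
proof -
  have "filterlim (tau h) at_top sequentially"
    using assms(1) unfolding admissible_def tau_def by (simp add: fun_eq_iff)
  then have "eventually (\<lambda>n. tau h n > t) sequentially"
    by (simp add: filterlim_at_top_dense)
  then obtain K where K: "\<And>n. n \<ge> K \<Longrightarrow> tau h n > t"
    by (auto simp: eventually_sequentially)
  have bnd: "y \<le> K" if "tau h y \<le> t" for y
  proof (rule ccontr)
    assume "\<not> y \<le> K"
    then have "tau h y > t" using K by simp
    then show False using that by simp
  qed
  have t0: "tau h 0 \<le> t" using assms(2) by (simp add: tau_def)
  show "tau h (mfun h t) \<le> t"
    unfolding mfun_def by (rule GreatestI_nat[where P="\<lambda>k. tau h k \<le> t", OF t0 bnd])
  show "k \<le> mfun h t" if "tau h k \<le> t"
    unfolding mfun_def by (rule Greatest_le_nat[where P="\<lambda>k. tau h k \<le> t", OF that bnd])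
qed
lemma pt_lemma:
  fixes \<Phi> :: "nat \<times> nat \<Rightarrow> 'a::real_normed_vector \<times> 'b::real_normed_vector"
    and f :: "nat \<Rightarrow> 'a \<times> 'b"
  assumes ahs: "admissible hs" and ahf: "admissible hf"
    and rat: "(\<lambda>k. hs k / hf k) \<longlonglongrightarrow> 0" and bf: "bounded (range f)"
    and ps: "asym_pseudo_traj hs (fhat E (\<lambda>p. fst (\<Phi> p)) hs) (\<lambda>k. fst (f k))"
    and pf: "asym_pseudo_traj hf (fhat E (\<lambda>p. snd (\<Phi> p)) hf) (\<lambda>k. snd (f k))"
  shows "asym_pseudo_traj hf (fhat E \<Phi> hf) (\<lambda>k. (0, snd (f k)))"
  unfolding asym_pseudo_traj_def
proof (intro allI impI)
  fix T e :: real assume T: "T > 0" and e: "e > 0"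
  obtain M0 where M0: "M0 > 0" "\<And>i. norm (f i) \<le> M0"
    using bf unfolding bounded_pos by auto
  define M where "M = M0"
  have Mp: "M > 0" using M0 M_def by simp
  have Mb: "norm (fst (f i)) \<le> M" for i
  proof -
    have "norm (fst (f i)) \<le> norm (fst (f i), snd (f i))" by (rule norm_fst_le)
    also have "\<dots> = norm (f i)" by simp
    also have "\<dots> \<le> M0" by (rule M0(2))
    finally show ?thesis unfolding M_def .
  qed
  define \<delta> where "\<delta> = min (1 / T) (e / (3 * M * T))"
  have dp: "\<delta> > 0" using T e Mp unfolding \<delta>_def by simp
  have "eventually (\<lambda>i. hs i / hf i < \<delta>) sequentially"
    using order_tendstoD(2)[OF rat dp] .
  then obtain N1 where N1: "\<And>i. i \<ge> N1 \<Longrightarrow> hs i / hf i < \<delta>"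
    by (auto simp: eventually_sequentially)
  have e3: "e / 3 > 0" using e by simp
  obtain N2 where N2: "\<And>n k. n \<ge> N2 \<Longrightarrow> n + 1 \<le> k \<and> k \<le> mfun hs (tau hs n + 1) \<Longrightarrow>
      norm (\<Sum>i=n..<k. hs (Suc i) *\<^sub>R (fhat E (\<lambda>p. fst (\<Phi> p)) hs i - fst (f i))) \<le> e / 3"
    using ps e3 unfolding asym_pseudo_traj_def by (meson zero_less_one)
  obtain N3 where N3: "\<And>n k. n \<ge> N3 \<Longrightarrow> n + 1 \<le> k \<and> k \<le> mfun hf (tau hf n + T) \<Longrightarrow>
      norm (\<Sum>i=n..<k. hf (Suc i) *\<^sub>R (fhat E (\<lambda>p. snd (\<Phi> p)) hf i - snd (f i))) \<le> e / 3"
    using pf e3 T unfolding asym_pseudo_traj_def by meson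
  show "\<exists>N. \<forall>n\<ge>N. \<forall>k. n + 1 \<le> k \<and> k \<le> mfun hf (tau hf n + T) \<longrightarrow>
        norm (\<Sum>i = n..<k. hf (Suc i) *\<^sub>R (fhat E \<Phi> hf i - (0, snd (f i)))) \<le> e"
  proof (intro exI[of _ "max N1 (max N2 N3)"] allI impI)
    fix n k assume n: "max N1 (max N2 N3) \<le> n" and k: "n + 1 \<le> k \<and> k \<le> mfun hf (tau hf n + T)"
    have tnn: "tau hf n + T \<ge> 0"
      using tau_mono[OF ahf, of 0 n] T by (simp add: tau_def)
    have "tau hf k \<le> tau hf (mfun hf (tau hf n + T))"
      using tau_mono[OF ahf] k by simp
    also have "\<dots> \<le> tau hf n + T" using mfun_props(1)[OF ahf tnn] .
    finally have "tau hf k \<le> tau hf n + T" .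
    then have sumhf: "(\<Sum>i=n..<k. hf (Suc i)) \<le> T"
      using tau_split[of n k hf] k by simp
    have each: "hs (Suc i) \<le> \<delta> * hf (Suc i)" if "i \<in> {n..<k}" for i
    proof -
      have "Suc i \<ge> N1" using that n by simp
      then have "hs (Suc i) / hf (Suc i) < \<delta>" by (rule N1)
      then show ?thesis using adm_pos[OF ahf, of i] by (simp add: divide_less_eq less_imp_le)
    qed
    have "(\<Sum>i=n..<k. hs (Suc i)) \<le> (\<Sum>i=n..<k. \<delta> * hf (Suc i))"
      using each by (rule sum_mono)
    also have "\<dots> = \<delta> * (\<Sum>i=n..<k. hf (Suc i))" by (simp add: sum_distrib_left)
    also have "\<dots> \<le> \<delta> * T" using sumhf dp by (simp add: mult_left_mono)
    finally have sumhs: "(\<Sum>i=n..<k. hs (Suc i)) \<le> \<delta> * T" .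
    have dT1: "\<delta> * T \<le> 1"
    proof -
      have "\<delta> * T \<le> (1 / T) * T" unfolding \<delta>_def by (rule mult_right_mono[OF min.cobounded1]) (use T in simp)
      then show ?thesis using T by simp
    qed
    have dT2: "\<delta> * T * M \<le> e / 3"
    proof -
      have "\<delta> * T \<le> e / (3 * M * T) * T" unfolding \<delta>_def by (rule mult_right_mono[OF min.cobounded2]) (use T in simp)
      also have "\<dots> = e / (3 * M)" using T by simp
      finally have "\<delta> * T * M \<le> e / (3 * M) * M" using Mp by (intro mult_right_mono) auto
      also have "\<dots> = e / 3" using Mp by simp
      finally show ?thesis .
    qed
    have "tau hs k \<le> tau hs n + 1" using tau_split[of n k hs] k sumhs dT1 by simp
    then have kms: "k \<le> mfun hs (tau hs n + 1)"
      using mfun_props(2)[OF ahs] tau_mono[OF ahs, of 0 n] by (simp add: tau_def)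
    have A: "norm (\<Sum>i=n..<k. hs (Suc i) *\<^sub>R (fhat E (\<lambda>p. fst (\<Phi> p)) hs i - fst (f i))) \<le> e / 3"
      using N2[of n k] n k kms by simp
    have B: "norm (\<Sum>i=n..<k. hf (Suc i) *\<^sub>R (fhat E (\<lambda>p. snd (\<Phi> p)) hf i - snd (f i))) \<le> e / 3"
      using N3[of n k] n k by simp
    have "norm (\<Sum>i=n..<k. hs (Suc i) *\<^sub>R fst (f i)) \<le> (\<Sum>i=n..<k. norm (hs (Suc i) *\<^sub>R fst (f i)))"
      by (rule norm_sum)
    also have "\<dots> \<le> (\<Sum>i=n..<k. hs (Suc i) * M)"
      using adm_pos[OF ahs] Mb by (intro sum_mono) (simp add: less_imp_le mult_left_mono)
    also have "\<dots> = (\<Sum>i=n..<k. hs (Suc i)) * M" by (simp add: sum_distrib_right)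
    also have "\<dots> \<le> \<delta> * T * M" using sumhs Mp by (simp add: mult_right_mono)
    finally have Cc: "norm (\<Sum>i=n..<k. hs (Suc i) *\<^sub>R fst (f i)) \<le> e / 3" using dT2 by simp
    have termeq: "hf (Suc i) *\<^sub>R (fhat E \<Phi> hf i - (0, snd (f i))) =
       (hs (Suc i) *\<^sub>R (fhat E (\<lambda>p. fst (\<Phi> p)) hs i - fst (f i)) + hs (Suc i) *\<^sub>R fst (f i),
        hf (Suc i) *\<^sub>R (fhat E (\<lambda>p. snd (\<Phi> p)) hf i - snd (f i)))" for i
      using adm_pos[OF ahs, of i] adm_pos[OF ahf, of i]
      by (simp add: fhat_def prod_eq_iff algebra_simps)
    have "(\<Sum>i=n..<k. hf (Suc i) *\<^sub>R (fhat E \<Phi> hf i - (0, snd (f i)))) =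
       ((\<Sum>i=n..<k. hs (Suc i) *\<^sub>R (fhat E (\<lambda>p. fst (\<Phi> p)) hs i - fst (f i))) + (\<Sum>i=n..<k. hs (Suc i) *\<^sub>R fst (f i)),
        (\<Sum>i=n..<k. hf (Suc i) *\<^sub>R (fhat E (\<lambda>p. snd (\<Phi> p)) hf i - snd (f i))))"
      unfolding termeq sum_prod by (simp add: sum.distrib)
    then have "norm (\<Sum>i=n..<k. hf (Suc i) *\<^sub>R (fhat E \<Phi> hf i - (0, snd (f i)))) \<le>
       norm ((\<Sum>i=n..<k. hs (Suc i) *\<^sub>R (fhat E (\<lambda>p. fst (\<Phi> p)) hs i - fst (f i))) + (\<Sum>i=n..<k. hs (Suc i) *\<^sub>R fst (f i)))
       + norm (\<Sum>i=n..<k. hf (Suc i) *\<^sub>R (fhat E (\<lambda>p. snd (\<Phi> p)) hf i - snd (f i)))"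
      by (simp add: norm_Pair_le)
    also have "\<dots> \<le> e / 3 + e / 3 + e / 3"
      using A B Cc norm_triangle_ineq[of "\<Sum>i=n..<k. hs (Suc i) *\<^sub>R (fhat E (\<lambda>p. fst (\<Phi> p)) hs i - fst (f i))"
          "\<Sum>i=n..<k. hs (Suc i) *\<^sub>R fst (f i)"] by linarith
    finally show "norm (\<Sum>i = n..<k. hf (Suc i) *\<^sub>R (fhat E \<Phi> hf i - (0, snd (f i)))) \<le> e" by simp
  qed
qed
lemma limsup_lemma:
  fixes \<Phi> :: "nat \<Rightarrow> 'a::euclidean_space \<times> 'b::euclidean_space"
    and f :: "nat \<Rightarrow> 'a \<times> 'b"
  assumes bf: "bounded (range f)"
    and ls: "seq_limsup (\<lambda>k. (\<Phi> k, f k)) \<subseteq> gph_restr C (F1 Fs Ff)"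
  shows "seq_limsup (\<lambda>k. (\<Phi> k, ((0::'a), snd (f k)))) \<subseteq> gph_restr C (\<lambda>x. {0} \<times> Ff x)"
proof
  fix z assume "z \<in> seq_limsup (\<lambda>k. (\<Phi> k, ((0::'a), snd (f k))))"
  then obtain r where r: "strict_mono r" and lim: "((\<lambda>k. (\<Phi> k, ((0::'a), snd (f k)))) \<circ> r) \<longlonglongrightarrow> z"
    unfolding seq_limsup_def by blast
  have "bounded (range (\<lambda>i. fst (f (r i))))"
  proof -
    have "range (\<lambda>i. fst (f (r i))) \<subseteq> fst ` range f" by auto
    moreover have "bounded (fst ` range f)" using bf by (rule bounded_fst)
    ultimately show ?thesis by (rule bounded_subset[rotated])
  qed
  then obtain y r2 where r2: "strict_mono r2" and ly: "((\<lambda>i. fst (f (r i))) \<circ> r2) \<longlonglongrightarrow> y"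
    using bounded_imp_convergent_subsequence by blast
  have lim2: "(\<lambda>i. (\<Phi> (r (r2 i)), ((0::'a), snd (f (r (r2 i)))))) \<longlonglongrightarrow> z"
    using LIMSEQ_subseq_LIMSEQ[OF lim r2] by (simp add: o_def)
  have l1: "(\<lambda>i. \<Phi> (r (r2 i))) \<longlonglongrightarrow> fst z" using tendsto_fst[OF lim2] by simp
  have l2: "(\<lambda>i. snd (f (r (r2 i)))) \<longlonglongrightarrow> snd (snd z)" using tendsto_snd[OF tendsto_snd[OF lim2]] by simp
  have l0: "(\<lambda>i. (0::'a)) \<longlonglongrightarrow> fst (snd z)" using tendsto_fst[OF tendsto_snd[OF lim2]] by simp
  then have z0: "fst (snd z) = 0" using LIMSEQ_unique tendsto_const by blast
  have ly': "(\<lambda>i. fst (f (r (r2 i)))) \<longlonglongrightarrow> y" using ly by (simp add: o_def)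
  have "((\<lambda>k. (\<Phi> k, f k)) \<circ> (r \<circ> r2)) \<longlonglongrightarrow> (fst z, (y, snd (snd z)))"
  proof -
    have "(\<lambda>i. (\<Phi> (r (r2 i)), (fst (f (r (r2 i))), snd (f (r (r2 i)))))) \<longlonglongrightarrow> (fst z, (y, snd (snd z)))"
      by (intro tendsto_Pair l1 ly' l2)
    then show ?thesis by (simp add: o_def)
  qed
  moreover have "strict_mono (r \<circ> r2)" using r r2 by (rule strict_mono_o)
  ultimately have "(fst z, (y, snd (snd z))) \<in> seq_limsup (\<lambda>k. (\<Phi> k, f k))"
    unfolding seq_limsup_def by blast
  with ls have "(fst z, (y, snd (snd z))) \<in> gph_restr C (F1 Fs Ff)" by blast
  then have "fst z \<in> C" "snd (snd z) \<in> Ff (fst z)" by (auto simp: gph_restr_def F1_def)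
  then show "z \<in> gph_restr C (\<lambda>x. {0} \<times> Ff x)"
    using z0 by (cases z) (auto simp: gph_restr_def mem_Times_iff)
qed

theorem theorem1:
  fixes C D :: "('a::euclidean_space \<times> 'b::euclidean_space) set"
    and Fs :: "'a \<times> 'b \<Rightarrow> 'a set" and Ff :: "'a \<times> 'b \<Rightarrow> 'b set"
    and G :: "'a \<times> 'b \<Rightarrow> ('a \<times> 'b) set"
    and E :: "(nat \<times> nat) set" and \<Phi> :: "nat \<times> nat \<Rightarrow> 'a \<times> 'b"
    and hs hf :: "nat \<Rightarrow> real"
  assumes "hybrid_basic_conditions C (F1 Fs Ff) D G"
    and "tt_asymptotic_simulation C Fs Ff D G E \<Phi> hs hf"
  shows "asymptotic_simulation C (\<lambda>x. {0} \<times> Ff x) D G E \<Phi> hf"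
proof -
  have bc: "bounded_complete_hs E \<Phi>" and adm: "admissible hs" "admissible hf"
    and rat: "(\<lambda>k. hs k / hf k) \<longlonglongrightarrow> 0"
    and cj: "complete_j E \<longrightarrow>
        seq_limsup (\<lambda>j. (\<Phi> (kbar E j, j), \<Phi> (kbar E j, Suc j))) \<subseteq> gph_restr D G"
    and ck: "complete_k E \<longrightarrow>
        (\<exists>f :: nat \<Rightarrow> 'a \<times> 'b. bounded (range f) \<and>
           seq_limsup (\<lambda>k. (\<Phi> (k, jbar E k), f k)) \<subseteq> gph_restr C (F1 Fs Ff) \<and>
           asym_pseudo_traj hs (fhat E (\<lambda>p. fst (\<Phi> p)) hs) (\<lambda>k. fst (f k)) \<and>
           asym_pseudo_traj hf (fhat E (\<lambda>p. snd (\<Phi> p)) hf) (\<lambda>k. snd (f k)))"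
    using assms(2) unfolding tt_asymptotic_simulation_def tt_admissible_def by auto
  have "complete_k E \<longrightarrow>
        (\<exists>g :: nat \<Rightarrow> 'a \<times> 'b. bounded (range g) \<and>
           seq_limsup (\<lambda>k. (\<Phi> (k, jbar E k), g k)) \<subseteq> gph_restr C (\<lambda>x. {0} \<times> Ff x) \<and>
           asym_pseudo_traj hf (fhat E \<Phi> hf) g)"
  proof
    assume "complete_k E"
    with ck obtain f :: "nat \<Rightarrow> 'a \<times> 'b" where bf: "bounded (range f)"
      and ls: "seq_limsup (\<lambda>k. (\<Phi> (k, jbar E k), f k)) \<subseteq> gph_restr C (F1 Fs Ff)"
      and ps: "asym_pseudo_traj hs (fhat E (\<lambda>p. fst (\<Phi> p)) hs) (\<lambda>k. fst (f k))"
      and pf: "asym_pseudo_traj hf (fhat E (\<lambda>p. snd (\<Phi> p)) hf) (\<lambda>k. snd (f k))"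
      by blast
    have bg: "bounded (range (\<lambda>k. ((0::'a), snd (f k))))"
    proof -
      have "range (\<lambda>k. ((0::'a), snd (f k))) \<subseteq> {0} \<times> snd ` range f" by auto
      moreover have "bounded ({0::'a} \<times> snd ` range f)"
        using bf by (intro bounded_Times bounded_snd) auto
      ultimately show ?thesis by (rule bounded_subset[rotated])
    qed
    show "\<exists>g :: nat \<Rightarrow> 'a \<times> 'b. bounded (range g) \<and>
           seq_limsup (\<lambda>k. (\<Phi> (k, jbar E k), g k)) \<subseteq> gph_restr C (\<lambda>x. {0} \<times> Ff x) \<and>
           asym_pseudo_traj hf (fhat E \<Phi> hf) g"
      using bg limsup_lemma[OF bf ls] pt_lemma[OF adm rat bf ps pf] by blast
  qed
  then show ?thesis
    unfolding asymptotic_simulation_def using bc adm cj by blast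
qed

end
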